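(* Let $x_j=\ell_j/p_j$. Then $\sum_{n=1}^{2P}n\,\chi_{2P}^{(\ell_1,\ell_2,\ell_3)}(n)\ne0$ if and only if \[ 1<x_1+x_2+x_3<3,\quad -1<x_1+x_2-x_3<1,\quad -1<x_1-x_2+x_3<1,\quad -1<-x_1+x_2+x_3<1, \] and in that case $\sum_{n=1}^{2P}n\,\chi_{2P}^{(\ell_1,\ell_2,\ell_3)}(n)=4P$.
   Context: $p_1,p_2,p_3$ pairwise coprime positive integers, $P=p_1p_2p_3$, integers $1\le\ell_j\le p_j-1$. The odd function $\chi_{2P}^{(\ell_1,\ell_2,\ell_3)}:\mathbb Z\to\{0,\pm1\}$, periodic mod $2P$, is defined by: $\chi(n)=1$ if $n\equiv P(1+\sum_j\varepsilon_j\ell_j/p_j)\pmod{2P}$ for some signs $\varepsilon_j\in\{\pm1\}$ with $\varepsilon_1\varepsilon_2\varepsilon_3=-1$; $\chi(n)=-1$ if this holds with $\varepsilon_1\varepsilon_2\varepsilon_3=1$; $\chi(n)=0$ otherwise. *)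

theory Defs
  imports Complex_Main
begin

text \<open>The residue P(1 + e1 l1/p1 + e2 l2/p2 + e3 l3/p3), written as an integer,
  where P = p1 p2 p3.\<close>
definition chi_point :: "int \<Rightarrow> int \<Rightarrow> int \<Rightarrow> int \<Rightarrow> int \<Rightarrow> int \<Rightarrow> int \<Rightarrow> int \<Rightarrow> int \<Rightarrow> int" where
  "chi_point p1 p2 p3 l1 l2 l3 e1 e2 e3 =
     p1*p2*p3 + e1*l1*p2*p3 + e2*l2*p1*p3 + e3*l3*p1*p2"

definition chi_hit :: "int \<Rightarrow> int \<Rightarrow> int \<Rightarrow> int \<Rightarrow> int \<Rightarrow> int \<Rightarrow> int \<Rightarrow> int \<Rightarrow> bool" where
  "chi_hit p1 p2 p3 l1 l2 l3 s n \<longleftrightarrow>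
     (\<exists>e1\<in>{-1,1}. \<exists>e2\<in>{-1,1}. \<exists>e3\<in>{-1,1}. e1*e2*e3 = s \<and>
        n mod (2*p1*p2*p3) = chi_point p1 p2 p3 l1 l2 l3 e1 e2 e3 mod (2*p1*p2*p3))"

definition chi :: "int \<Rightarrow> int \<Rightarrow> int \<Rightarrow> int \<Rightarrow> int \<Rightarrow> int \<Rightarrow> int \<Rightarrow> int" where
  "chi p1 p2 p3 l1 l2 l3 n =
     (if chi_hit p1 p2 p3 l1 l2 l3 (-1) n then 1
      else if chi_hit p1 p2 p3 l1 l2 l3 1 n then -1 else 0)"

end

theory Submission
  imports Defs
begin



lemma key:
  fixes p q l d r :: int
  assumes "p dvd d*l*q + p*r" "coprime p q" "0<l" "l<p" "d \<in> {-1,0,1}"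
  shows "d = 0"
proof -
  have "p dvd d*l*q" using assms(1) by (simp add: dvd_add_left_iff)
  hence "p dvd d*l" using assms(2) by (metis coprime_dvd_mult_left_iff)
  thus ?thesis using assms(3,4,5) zdvd_imp_le by fastforce
qed

lemma modQ:
  fixes a Q :: int
  assumes "Q > 0" "-Q \<le> a" "a < 2*Q"
  shows "a mod Q = (if a < 0 then a + Q else if a < Q then a else a - Q)"
proof (cases "a < 0")
  case True
  have "a mod Q = (a + Q) mod Q" by simp
  also have "\<dots> = a + Q" using True assms by (intro mod_pos_pos_trivial) auto
  finally show ?thesis using True by simp
next
  case False
  show ?thesis
  proof (cases "a < Q")
    case True thus ?thesis using False by simp
  next
    case F2: False
    have "a mod Q = (a - Q) mod Q" by simp
    also have "\<dots> = a - Q" using F2 assms by (intro mod_pos_pos_trivial) auto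
    finally show ?thesis using False F2 by simp
  qed
qed


lemma fin:
  fixes P A B C Q S :: int
  assumes "0<A" "A<P" "0<B" "B<P" "0<C" "C<P" "Q = 2*P"
   "P + A + B + C \<noteq> 2*P" "P + A + B - C \<noteq> 2*P" "P + A - B + C \<noteq> 2*P" "P - A + B + C \<noteq> 2*P"
     "P + A - B - C \<noteq> 0" "P - A + B - C \<noteq> 0" "P - A - B + C \<noteq> 0" "P - A - B - C \<noteq> 0"
   and S0: "S = (let f = (\<lambda>a. if a < 0 then a + Q else if a < Q then a else a - Q) in - f (P + A + B + C) + f (P + A + B - C) + f (P + A - B + C) - f (P + A - B - C)
     + f (P - A + B + C) - f (P - A + B - C) - f (P - A - B + C) + f (P - A - B - C))"
  shows "(S \<noteq> 0 \<longleftrightarrow> (P < A+B+C \<and> A+B+C < 3*P \<and> -P < A+B-C \<and> A+B-C < P \<and> -P < A-B+C \<and> A-B+C < P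
          \<and> -P < -A+B+C \<and> -A+B+C < P)) \<and> (S \<noteq> 0 \<longrightarrow> S = 4*P)"
proof -
  define f where "f = (\<lambda>a. if a < 0 then a + Q else if a < Q then a else a - Q)"
  have S: "S = - f (P + A + B + C) + f (P + A + B - C) + f (P + A - B + C) - f (P + A - B - C)
     + f (P - A + B + C) - f (P - A + B - C) - f (P - A - B + C) + f (P - A - B - C)"
    unfolding S0 f_def Let_def ..
  have "f (P + A + B + C) = (if A+B+C < P then P + A + B + C else A+B+C - P)" using assms unfolding f_def by auto
  moreover have "f (P + A + B - C) = (if A+B-C < P then P + A + B - C else A+B-C - P)" using assms unfolding f_def by auto
  moreover have "f (P + A - B + C) = (if A-B+C < P then P + A - B + C else A-B+C - P)" using assms unfolding f_def by auto
  moreover have "f (P - A + B + C) = (if -A+B+C < P then P - A + B + C else -A+B+C - P)" using assms unfolding f_def by auto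
  moreover have "f (P + A - B - C) = (if A-B-C < -P then 3*P + A - B - C else P + A - B - C)" using assms unfolding f_def by auto
  moreover have "f (P - A + B - C) = (if -A+B-C < -P then 3*P - A + B - C else P - A + B - C)" using assms unfolding f_def by auto
  moreover have "f (P - A - B + C) = (if -A-B+C < -P then 3*P - A - B + C else P - A - B + C)" using assms unfolding f_def by auto
  moreover have "f (P - A - B - C) = (if -A-B-C < -P then 3*P - A - B - C else P - A - B - C)" using assms unfolding f_def by auto
  ultimately show ?thesis using assms(1-15) unfolding S by (smt (verit))
qed

theorem mainTheorem3:
  fixes p1 p2 p3 l1 l2 l3 :: int
  assumes "p1 > 0" "p2 > 0" "p3 > 0"
    and "coprime p1 p2" "coprime p1 p3" "coprime p2 p3"
    and "1 \<le> l1" "l1 \<le> p1 - 1" "1 \<le> l2" "l2 \<le> p2 - 1" "1 \<le> l3" "l3 \<le> p3 - 1"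
  defines "P \<equiv> p1 * p2 * p3"
    and "x1 \<equiv> real_of_int l1 / real_of_int p1"
    and "x2 \<equiv> real_of_int l2 / real_of_int p2"
    and "x3 \<equiv> real_of_int l3 / real_of_int p3"
  shows "((\<Sum>n=1..2*P. n * chi p1 p2 p3 l1 l2 l3 n) \<noteq> 0 \<longleftrightarrow>
            (1 < x1 + x2 + x3 \<and> x1 + x2 + x3 < 3 \<and>
             -1 < x1 + x2 - x3 \<and> x1 + x2 - x3 < 1 \<and>
             -1 < x1 - x2 + x3 \<and> x1 - x2 + x3 < 1 \<and>
             -1 < - x1 + x2 + x3 \<and> - x1 + x2 + x3 < 1))
       \<and> ((\<Sum>n=1..2*P. n * chi p1 p2 p3 l1 l2 l3 n) \<noteq> 0 \<longrightarrow>
            (\<Sum>n=1..2*P. n * chi p1 p2 p3 l1 l2 l3 n) = 4 * P)"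
proof -
  define Q where "Q = 2*p1*p2*p3"
  define E where "E = {-1,1::int} \<times> {-1,1::int} \<times> {-1,1::int}"
  define pt where "pt = (\<lambda>(e1,e2,e3). chi_point p1 p2 p3 l1 l2 l3 e1 e2 e3)"
  define pr where "pr = (\<lambda>(e1::int,e2::int,e3::int). e1*e2*e3)"
  define A where "A = l1*p2*p3"
  define B where "B = l2*p1*p3"
  define C where "C = l3*p1*p2"
  have QP: "Q = 2*P" unfolding Q_def P_def by simp
  have Ppos: "P > 0" unfolding P_def using assms(1-3) by simp
  have A0: "0 < A" "A < P" unfolding A_def P_def using assms
    by (simp_all add: mult.assoc mult_strict_right_mono)
  have B0: "0 < B" "B < P" unfolding B_def P_def using assms
    by (simp_all add: mult.assoc mult_strict_right_mono mult.left_commute[of p1])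
  have C0: "0 < C" "C < P" unfolding C_def P_def using assms
    by (simp_all add: mult.commute mult_strict_right_mono mult.left_commute[of p1])
  have ptE: "pt (e1,e2,e3) = P + e1*A + e2*B + e3*C" for e1 e2 e3
    unfolding pt_def chi_point_def P_def A_def B_def C_def by (simp add: algebra_simps)
  have hit: "chi_hit p1 p2 p3 l1 l2 l3 s n \<longleftrightarrow> (\<exists>e\<in>E. pr e = s \<and> n mod Q = pt e mod Q)" for s n
    unfolding chi_hit_def E_def pr_def pt_def Q_def by auto
  have dist: "e = e'" if "e \<in> E" "e' \<in> E" "pt e mod Q = pt e' mod Q" for e e'
  proof -
    obtain e1 e2 e3 where e: "e = (e1,e2,e3)" by (cases e) auto
    obtain f1 f2 f3 where f: "e' = (f1,f2,f3)" by (cases e') auto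
    have mem: "e1 \<in> {-1,1}" "e2 \<in> {-1,1}" "e3 \<in> {-1,1}" "f1 \<in> {-1,1}" "f2 \<in> {-1,1}" "f3 \<in> {-1,1}"
      using that(1,2) e f E_def by auto
    define d1 where "d1 = (e1 - f1) div 2"
    define d2 where "d2 = (e2 - f2) div 2"
    define d3 where "d3 = (e3 - f3) div 2"
    have d1: "e1 - f1 = 2*d1" "d1 \<in> {-1,0,1}" using mem unfolding d1_def by auto
    have d2: "e2 - f2 = 2*d2" "d2 \<in> {-1,0,1}" using mem unfolding d2_def by auto
    have d3: "e3 - f3 = 2*d3" "d3 \<in> {-1,0,1}" using mem unfolding d3_def by auto
    have "Q dvd pt e - pt e'" using that(3) by (simp add: mod_eq_dvd_iff)
    also have "pt e - pt e' = 2*(d1*A + d2*B + d3*C)"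
      unfolding e f ptE using d1 d2 d3 by (simp add: algebra_simps) 
    finally have "P dvd d1*A + d2*B + d3*C" unfolding QP
      by (subst (asm) dvd_times_left_cancel_iff) simp_all
    hence PD: "P dvd d1*l1*p2*p3 + d2*l2*p1*p3 + d3*l3*p1*p2"
      unfolding A_def B_def C_def by (simp add: algebra_simps)
    have "p1 dvd P" "p2 dvd P" "p3 dvd P" unfolding P_def by auto
    hence "p1 dvd d1*l1*(p2*p3) + p1*(d2*l2*p3 + d3*l3*p2)"
      and "p2 dvd d2*l2*(p1*p3) + p2*(d1*l1*p3 + d3*l3*p1)"
      and "p3 dvd d3*l3*(p1*p2) + p3*(d1*l1*p2 + d2*l2*p1)"
      using PD by (auto simp: algebra_simps intro: dvd_trans)
    note h = this
    have cp: "coprime p1 (p2*p3)" "coprime p2 (p1*p3)" "coprime p3 (p1*p2)"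
      using assms(4-6) by (simp_all add: coprime_commute)
    have "d1 = 0" by (rule key[OF h(1) cp(1)]) (use assms d1(2) in auto)
    moreover have "d2 = 0" by (rule key[OF h(2) cp(2)]) (use assms d2(2) in auto)
    moreover have "d3 = 0" by (rule key[OF h(3) cp(3)]) (use assms d3(2) in auto)
    ultimately have "d1 = 0" "d2 = 0" "d3 = 0" by auto
    thus ?thesis using d1 d2 d3 e f by simp
  qed
  have nz: "pt e \<noteq> 0 \<and> pt e \<noteq> Q" if "e \<in> E" for e
  proof -
    obtain e1 e2 e3 where e: "e = (e1,e2,e3)" by (cases e) auto
    have mem: "e1 \<in> {-1,1}" using that e E_def by auto
    have "pt e = P + e1*A + e2*B + e3*C" using e ptE by simp
    have F: False if c: "pt e = c*P" for c
    proof -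
      have "e1*l1*(p2*p3) + p1*(p2*p3 + e2*l2*p3 + e3*l3*p2 - c*p2*p3) = 0"
        using c e ptE unfolding P_def A_def B_def C_def by (simp add: algebra_simps)
      hence "p1 dvd e1*l1*(p2*p3) + p1*(p2*p3 + e2*l2*p3 + e3*l3*p2 - c*p2*p3)" by simp
      hence "e1 = 0" using key[of p1 e1 l1 "p2*p3"] mem assms by auto
      thus False using mem by simp
    qed
    show ?thesis using F[of 0] F[of 2] QP by auto
  qed
  have rng: "- Q < pt e \<and> pt e < 2*Q" if "e \<in> E" for e
  proof -
    obtain e1 e2 e3 where e: "e = (e1,e2,e3)" by (cases e) auto
    have mem: "e1 \<in> {-1,1}" "e2 \<in> {-1,1}" "e3 \<in> {-1,1}" using that e E_def by auto
    show ?thesis unfolding e ptE QP using mem A0 B0 C0 by auto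
  qed
  have finE: "finite E" unfolding E_def by simp
  have chiE: "chi p1 p2 p3 l1 l2 l3 n = (\<Sum>e\<in>E. if n mod Q = pt e mod Q then - pr e else 0)" for n
  proof (cases "\<exists>e\<in>E. n mod Q = pt e mod Q")
    case True
    then obtain e0 where e0: "e0 \<in> E" "n mod Q = pt e0 mod Q" by blast
    have iff: "n mod Q = pt e mod Q \<longleftrightarrow> e = e0" if "e \<in> E" for e
    proof
      assume "n mod Q = pt e mod Q"
      thus "e = e0" using dist[OF that e0(1)] e0(2) by argo
    next
      assume "e = e0" thus "n mod Q = pt e mod Q" using e0(2) by blast
    qed
    have "(\<Sum>e\<in>E. if n mod Q = pt e mod Q then - pr e else 0) = (\<Sum>e\<in>E. if e = e0 then - pr e else 0)"
      by (rule sum.cong) (simp_all add: iff)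
    also have "\<dots> = - pr e0" using e0(1) finE by (simp add: sum.delta)
    finally have S: "(\<Sum>e\<in>E. if n mod Q = pt e mod Q then - pr e else 0) = - pr e0" .
    have pr01: "pr e0 = 1 \<or> pr e0 = -1" using e0(1) unfolding E_def pr_def by auto
    have h: "chi_hit p1 p2 p3 l1 l2 l3 s n \<longleftrightarrow> pr e0 = s" for s
      unfolding hit using iff e0 by blast
    show ?thesis unfolding S chi_def h using pr01 by auto
  next
    case False
    hence "chi_hit p1 p2 p3 l1 l2 l3 s n = False" for s unfolding hit by blast
    hence c0: "chi p1 p2 p3 l1 l2 l3 n = 0" unfolding chi_def by simp
    have "(\<Sum>e\<in>E. if n mod Q = pt e mod Q then - pr e else 0) = 0"
      by (rule sum.neutral) (use False in auto)
    thus ?thesis using c0 by simp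
  qed
  have inner: "(\<Sum>n=1..Q. (if n mod Q = pt e mod Q then - pr e * n else 0)) = - pr e * (pt e mod Q)"
    if "e \<in> E" for e
  proof -
    have Qpos: "Q > 0" using Ppos QP by simp
    have m: "0 < pt e mod Q" "pt e mod Q < Q"
      using nz[OF that] rng[OF that] Qpos modQ[OF Qpos rng[OF that, THEN conjunct1, THEN less_imp_le] rng[OF that, THEN conjunct2]]
      by (auto split: if_splits)
    have "(\<Sum>n=1..Q. (if n mod Q = pt e mod Q then - pr e * n else 0))
        = (\<Sum>n=1..Q. (if n = pt e mod Q then - pr e * n else 0))"
    proof (rule sum.cong)
      fix n assume "n \<in> {1..Q}"
      hence "n mod Q = (if n = Q then 0 else n)" by auto
      thus "(if n mod Q = pt e mod Q then - pr e * n else 0) = (if n = pt e mod Q then - pr e * n else 0)"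
        using m by auto
    qed simp
    also have "\<dots> = - pr e * (pt e mod Q)" using m by (simp add: sum.delta')
    finally show ?thesis .
  qed
  have "(\<Sum>n=1..2*P. n * chi p1 p2 p3 l1 l2 l3 n) = (\<Sum>n=1..Q. \<Sum>e\<in>E. (if n mod Q = pt e mod Q then - pr e * n else 0))"
    unfolding QP[symmetric] chiE sum_distrib_left
    by (intro sum.cong refl) (simp add: mult.commute)
  also have "\<dots> = (\<Sum>e\<in>E. \<Sum>n=1..Q. (if n mod Q = pt e mod Q then - pr e * n else 0))"
    by (rule sum.swap)
  also have "\<dots> = (\<Sum>e\<in>E. - pr e * (pt e mod Q))" using inner by simp
  finally have SUM: "(\<Sum>n=1..2*P. n * chi p1 p2 p3 l1 l2 l3 n) = (\<Sum>e\<in>E. - pr e * (pt e mod Q))" .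
  have Qpos: "Q > 0" using Ppos QP by simp
  have M: "(\<Sum>e\<in>E. - pr e * (pt e mod Q)) = (\<Sum>e\<in>E. - pr e * (if pt e < 0 then pt e + Q else if pt e < Q then pt e else pt e - Q))"
  proof (rule sum.cong[OF refl])
    fix e assume "e \<in> E"
    hence "- Q \<le> pt e" "pt e < 2*Q" using rng[of e] by auto
    thus "- pr e * (pt e mod Q) = - pr e * (if pt e < 0 then pt e + Q else if pt e < Q then pt e else pt e - Q)"
      using modQ[OF Qpos] by presburger
  qed
  have Eset: "E = {(1,1,1),(1,1,-1),(1,-1,1),(1,-1,-1),(-1,1,1),(-1,1,-1),(-1,-1,1),(-1,-1,-1)}"
    unfolding E_def by auto
  have nzB: "P + A + B + C \<noteq> 2*P" "P + A + B - C \<noteq> 2*P" "P + A - B + C \<noteq> 2*P" "P - A + B + C \<noteq> 2*P"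
     "P + A - B - C \<noteq> 0" "P - A + B - C \<noteq> 0" "P - A - B + C \<noteq> 0" "P - A - B - C \<noteq> 0"
    using nz[of "(1,1,1)"] nz[of "(1,1,-1)"] nz[of "(1,-1,1)"] nz[of "(-1,1,1)"]
      nz[of "(1,-1,-1)"] nz[of "(-1,1,-1)"] nz[of "(-1,-1,1)"] nz[of "(-1,-1,-1)"]
    unfolding Eset ptE QP by (simp_all add: algebra_simps)
  have S8: "(\<Sum>n=1..2*P. n * chi p1 p2 p3 l1 l2 l3 n) =
    (\<Sum>e\<in>E. - pr e * (if pt e < 0 then pt e + Q else if pt e < Q then pt e else pt e - Q))"
    using SUM M by simp
  also have "\<dots> = (let f = (\<lambda>a. if a < 0 then a + Q else if a < Q then a else a - Q) in
     - f (P + A + B + C) + f (P + A + B - C) + f (P + A - B + C) - f (P + A - B - C)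
     + f (P - A + B + C) - f (P - A + B - C) - f (P - A - B + C) + f (P - A - B - C))"
    unfolding Eset by (simp add: pr_def ptE Let_def algebra_simps)
  finally have S9: "(\<Sum>n=1..2*P. n * chi p1 p2 p3 l1 l2 l3 n) = \<dots>" .
  have RP: "real_of_int P > 0" using Ppos by simp
  have xA: "x1 = real_of_int A / real_of_int P" unfolding x1_def A_def P_def using assms(1-3) by simp
  have xB: "x2 = real_of_int B / real_of_int P" unfolding x2_def B_def P_def using assms(1-3) by simp
  have xC: "x3 = real_of_int C / real_of_int P" unfolding x3_def C_def P_def using assms(1-3) by simp
  have c1: "x1 + x2 + x3 = real_of_int (A+B+C) / real_of_int P" unfolding xA xB xC using RP by (simp add: field_simps)
  have c2: "x1 + x2 - x3 = real_of_int (A+B-C) / real_of_int P" unfolding xA xB xC using RP by (simp add: field_simps)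
  have c3: "x1 - x2 + x3 = real_of_int (A-B+C) / real_of_int P" unfolding xA xB xC using RP by (simp add: field_simps)
  have c4: "- x1 + x2 + x3 = real_of_int (-A+B+C) / real_of_int P" unfolding xA xB xC using RP by (simp add: field_simps)
  have lt1: "(c < real_of_int y / real_of_int P) \<longleftrightarrow> (c * real_of_int P < real_of_int y)" for c y
    using RP by (simp add: pos_less_divide_eq)
  have lt2: "(real_of_int y / real_of_int P < c) \<longleftrightarrow> (real_of_int y < c * real_of_int P)" for c y
    using RP by (simp add: pos_divide_less_eq)
  have conv: "(1 < x1 + x2 + x3 \<and> x1 + x2 + x3 < 3 \<and>
             -1 < x1 + x2 - x3 \<and> x1 + x2 - x3 < 1 \<and>
             -1 < x1 - x2 + x3 \<and> x1 - x2 + x3 < 1 \<and>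
             -1 < - x1 + x2 + x3 \<and> - x1 + x2 + x3 < 1) \<longleftrightarrow>
        (P < A+B+C \<and> A+B+C < 3*P \<and> -P < A+B-C \<and> A+B-C < P \<and> -P < A-B+C \<and> A-B+C < P
          \<and> -P < -A+B+C \<and> -A+B+C < P)"
  proof -
    have k: "1 * real_of_int P = real_of_int P" "3 * real_of_int P = real_of_int (3*P)"
      "-1 * real_of_int P = real_of_int (-P)" by simp_all
    show ?thesis unfolding c1 c2 c3 c4 lt1 lt2 k of_int_less_iff ..
  qed
  show ?thesis unfolding conv by (rule fin[OF A0 B0 C0 QP nzB S9])
qed

end
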